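(* Let $G$ be an antimatroid on a ground set $S$ with $|S|=n$, with Tutte polynomial $T(G;x,y)=\sum_{i,j}b_{i,j}x^iy^j$. For $i\ge0$ let $a_{i,1}$ be the number of convex sets with $i$ elements and exactly one interior point, and for $p\in S$ let $\mathcal{C}_p$ be the collection of convex sets $C$ with $\mathrm{int}(C)=\{p\}$. Then $$b_{0,1}=\sum_{i=0}^{n}(-1)^ia_{i,1}=\sum_{p\in\mathrm{int}(S)}\ \sum_{C\in\mathcal{C}_p}(-1)^{|C|}.$$
   Context: An antimatroid on a finite set $S$ is a family $\mathcal{F}\subseteq 2^S$ of feasible sets with $\emptyset\in\mathcal{F}$, $S\in\mathcal{F}$, closed under union, and accessible: every nonempty $F\in\mathcal{F}$ contains some $x$ with $F\setminus\{x\}\in\mathcal{F}$. Its rank function is $r(A)=\max\{|F|:F\in\mathcal{F},F\subseteq A\}$, and its Tutte polynomial is $T(G;x,y)=\sum_{A\subseteq S}(x-1)^{r(S)-r(A)}(y-1)^{|A|-r(A)}$. A set $C$ is convex if $S\setminus C\in\mathcal{F}$; the convex closure $\overline{A}$ of $A$ is the smallest convex set containing $A$. For convex $C$, $p\in C$ is extreme if $p\notin\overline{C\setminus\{p\}}$; $\mathrm{int}(C)$ is the set of non-extreme points of $C$ (in particular $\mathrm{int}(S)$ is the set of non-extreme points of $S$). *)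

theory Defs
  imports "HOL-Computational_Algebra.Polynomial"
begin

definition antimatroid :: "'a set \<Rightarrow> 'a set set \<Rightarrow> bool" where
  "antimatroid S F \<longleftrightarrow> finite S \<and> F \<subseteq> Pow S \<and> {} \<in> F \<and> S \<in> F \<and>
     (\<forall>X\<in>F. \<forall>Y\<in>F. X \<union> Y \<in> F) \<and>
     (\<forall>X\<in>F. X \<noteq> {} \<longrightarrow> (\<exists>x\<in>X. X - {x} \<in> F))"

definition am_rank :: "'a set set \<Rightarrow> 'a set \<Rightarrow> nat" where
  "am_rank F A = Max {card X | X. X \<in> F \<and> X \<subseteq> A}"

text \<open>Tutte polynomial as a bivariate integer polynomial: outer variable y, inner
  (coefficient) variable x. So the coefficient of x^i y^j is coeff (coeff T j) i.\<close>
definition tutte_poly :: "'a set \<Rightarrow> 'a set set \<Rightarrow> int poly poly" where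
  "tutte_poly S F = (\<Sum>A\<in>Pow S.
      [:[:-1, 1:]:] ^ (am_rank F S - am_rank F A) * [:-1, 1:] ^ (card A - am_rank F A))"

definition tutte_coeff :: "'a set \<Rightarrow> 'a set set \<Rightarrow> nat \<Rightarrow> nat \<Rightarrow> int" where
  "tutte_coeff S F i j = coeff (coeff (tutte_poly S F) j) i"

definition am_convex :: "'a set \<Rightarrow> 'a set set \<Rightarrow> 'a set \<Rightarrow> bool" where
  "am_convex S F C \<longleftrightarrow> C \<subseteq> S \<and> S - C \<in> F"

definition am_closure :: "'a set \<Rightarrow> 'a set set \<Rightarrow> 'a set \<Rightarrow> 'a set" where
  "am_closure S F A = \<Inter> {C. am_convex S F C \<and> A \<subseteq> C}"

definition am_extreme :: "'a set \<Rightarrow> 'a set set \<Rightarrow> 'a set \<Rightarrow> 'a \<Rightarrow> bool" where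
  "am_extreme S F C p \<longleftrightarrow> p \<in> C \<and> p \<notin> am_closure S F (C - {p})"

definition am_int :: "'a set \<Rightarrow> 'a set set \<Rightarrow> 'a set \<Rightarrow> 'a set" where
  "am_int S F C = {p \<in> C. \<not> am_extreme S F C p}"

definition a_i1 :: "'a set \<Rightarrow> 'a set set \<Rightarrow> nat \<Rightarrow> nat" where
  "a_i1 S F i = card {C. am_convex S F C \<and> card C = i \<and> card (am_int S F C) = 1}"

end

theory Submission
  imports Defs
begin

definition ker :: "'a set set \<Rightarrow> 'a set \<Rightarrow> 'a set" where
  "ker F A = \<Union>{X\<in>F. X \<subseteq> A}"

lemma amD:
  assumes "antimatroid S F"
  shows "finite S" "F \<subseteq> Pow S" "{} \<in> F" "S \<in> F"
    "\<And>X Y. X \<in> F \<Longrightarrow> Y \<in> F \<Longrightarrow> X \<union> Y \<in> F"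
    "\<And>X. X \<in> F \<Longrightarrow> X \<noteq> {} \<Longrightarrow> \<exists>x\<in>X. X - {x} \<in> F"
proof -
  have h: "finite S \<and> F \<subseteq> Pow S \<and> {} \<in> F \<and> S \<in> F \<and>
     (\<forall>X\<in>F. \<forall>Y\<in>F. X \<union> Y \<in> F) \<and>
     (\<forall>X\<in>F. X \<noteq> {} \<longrightarrow> (\<exists>x\<in>X. X - {x} \<in> F))"
    by (rule iffD1[OF antimatroid_def assms])
  show "finite S" using h by (rule conjunct1)
  show "F \<subseteq> Pow S" using h by (elim conjE)
  show "{} \<in> F" using h by (elim conjE)
  show "S \<in> F" using h by (elim conjE)
  show "\<And>X Y. X \<in> F \<Longrightarrow> Y \<in> F \<Longrightarrow> X \<union> Y \<in> F" using h by (elim conjE) (erule ballE, erule ballE, assumption, simp_all)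
  show "\<And>X. X \<in> F \<Longrightarrow> X \<noteq> {} \<Longrightarrow> \<exists>x\<in>X. X - {x} \<in> F"
  proof -
    fix X assume "X \<in> F" "X \<noteq> {}"
    moreover have "\<forall>X\<in>F. X \<noteq> {} \<longrightarrow> (\<exists>x\<in>X. X - {x} \<in> F)" using h by (elim conjE)
    ultimately show "\<exists>x\<in>X. X - {x} \<in> F" by (elim ballE impE) auto
  qed
qed

lemma am_finF: "antimatroid S F \<Longrightarrow> finite F"
proof -
  assume a: "antimatroid S F"
  have "finite (Pow S)" using amD(1)[OF a] by simp
  then show ?thesis using amD(2)[OF a] by (rule finite_subset[rotated])
qed

lemma am_union: "antimatroid S F \<Longrightarrow> G \<subseteq> F \<Longrightarrow> \<Union>G \<in> F"
proof -
  assume a: "antimatroid S F" and g: "G \<subseteq> F"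
  have "finite G" using g am_finF[OF a] by (rule finite_subset)
  from this g show ?thesis
  proof (induction G rule: finite_induct)
    case empty then show ?case using amD(3)[OF a] by simp
  next
    case (insert X G)
    then have "X \<in> F" "\<Union>G \<in> F" by auto
    then have "X \<union> \<Union>G \<in> F" by (rule amD(5)[OF a])
    then show ?case by simp
  qed
qed

lemma ker_in: "antimatroid S F \<Longrightarrow> ker F A \<in> F"
  unfolding ker_def by (rule am_union) auto

lemma ker_sub: "ker F A \<subseteq> A" unfolding ker_def by auto

lemma ker_max: "X \<in> F \<Longrightarrow> X \<subseteq> A \<Longrightarrow> X \<subseteq> ker F A" unfolding ker_def by auto

lemma am_rank_ker: assumes a: "antimatroid S F" shows "am_rank F A = card (ker F A)"
proof -
  have fS: "finite S" using amD(1)[OF a] .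
  have kS: "ker F A \<subseteq> S" using ker_in[OF a] amD(2)[OF a] by auto
  have fk: "finite (ker F A)" using kS fS by (rule finite_subset)
  have eq: "{card X | X. X \<in> F \<and> X \<subseteq> A} = card ` {X \<in> F. X \<subseteq> A}" by blast
  have fin: "finite {card X | X. X \<in> F \<and> X \<subseteq> A}"
    unfolding eq using am_finF[OF a] by simp
  show ?thesis unfolding am_rank_def
  proof (rule Max_eqI[OF fin])
    fix y assume "y \<in> {card X | X. X \<in> F \<and> X \<subseteq> A}"
    then obtain X where X: "y = card X" "X \<in> F" "X \<subseteq> A" by auto
    have "X \<subseteq> ker F A" using ker_max[OF X(2,3)] .
    from card_mono[OF fk this] show "y \<le> card (ker F A)" using X(1) by simp
  next
    show "card (ker F A) \<in> {card X | X. X \<in> F \<and> X \<subseteq> A}"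
      using ker_in[OF a] ker_sub[of F A] by blast
  qed
qed

lemma augment:
  assumes a: "antimatroid S F" and K: "K \<in> F"
  shows "Y \<in> F \<Longrightarrow> \<not> Y \<subseteq> K \<Longrightarrow> \<exists>x\<in>Y - K. insert x K \<in> F"
proof (induction "card Y" arbitrary: Y rule: less_induct)
  case less
  have "Y \<subseteq> S" using less.prems amD(2)[OF a] by blast
  then have fY: "finite Y" using amD(1)[OF a] finite_subset by blast
  have "Y \<noteq> {}" using less.prems by auto
  then obtain y where y: "y \<in> Y" "Y - {y} \<in> F" using less.prems amD(6)[OF a] by blast
  show ?case
  proof (cases "Y - {y} \<subseteq> K")
    case True
    then have "y \<notin> K" using less.prems by auto
    moreover have "K \<union> Y \<in> F" using amD(5)[OF a K less.prems(1)] .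
    moreover have "K \<union> Y = insert y K" using True y by auto
    ultimately show ?thesis using y by auto
  next
    case False
    have "card (Y - {y}) < card Y" by (rule card_Diff1_less[OF fY y(1)])
    from less.hyps[OF this y(2) False] show ?thesis by auto
  qed
qed

lemma convex_inter: "antimatroid S F \<Longrightarrow> am_convex S F C \<Longrightarrow> am_convex S F D \<Longrightarrow> am_convex S F (C \<inter> D)"
proof -
  assume a: "antimatroid S F" and c: "am_convex S F C" and d: "am_convex S F D"
  have "S - (C \<inter> D) = (S - C) \<union> (S - D)" by auto
  then show ?thesis using amD(5)[OF a] c d unfolding am_convex_def by auto
qed

lemma extreme_iff:
  assumes a: "antimatroid S F" and C: "am_convex S F C" and x: "x \<in> C"
  shows "am_extreme S F C x \<longleftrightarrow> am_convex S F (C - {x})"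
proof
  assume "am_convex S F (C - {x})"
  then show "am_extreme S F C x" unfolding am_extreme_def am_closure_def using x by auto
next
  assume "am_extreme S F C x"
  then obtain D where D: "am_convex S F D" "C - {x} \<subseteq> D" "x \<notin> D"
    unfolding am_extreme_def am_closure_def by auto
  then have "C \<inter> D = C - {x}" by auto
  with convex_inter[OF a C D(1)] show "am_convex S F (C - {x})" by simp
qed

lemma extreme_iff2:
  assumes a: "antimatroid S F" and C: "am_convex S F C" and x: "x \<in> C"
  shows "am_extreme S F C x \<longleftrightarrow> insert x (S - C) \<in> F"
proof -
  have "S - (C - {x}) = insert x (S - C)" using C x unfolding am_convex_def by auto
  then show ?thesis using extreme_iff[OF a C x] C unfolding am_convex_def by auto
qed

lemma ker_conv:
  assumes a: "antimatroid S F" and C: "am_convex S F C" and B: "B \<subseteq> am_int S F C"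
  shows "ker F ((S - C) \<union> B) = S - C"
proof (rule ccontr)
  let ?K = "S - C"
  have K: "?K \<in> F" using C unfolding am_convex_def by auto
  assume ne: "ker F ((S - C) \<union> B) \<noteq> S - C"
  have "?K \<subseteq> ker F ((S - C) \<union> B)" using K by (intro ker_max) auto
  with ne have "\<not> ker F ((S - C) \<union> B) \<subseteq> ?K" by auto
  from augment[OF a K ker_in[OF a] this] obtain x where
    x: "x \<in> ker F ((S - C) \<union> B) - ?K" "insert x ?K \<in> F" by auto
  then have "x \<in> B" using x(1) ker_sub[of F "(S - C) \<union> B"] by blast
  then have "x \<in> C" "\<not> am_extreme S F C x" using B unfolding am_int_def by auto
  with extreme_iff2[OF a C] x(2) show False by auto
qed

lemma int_finite: "antimatroid S F \<Longrightarrow> am_convex S F C \<Longrightarrow> finite (am_int S F C)"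
proof -
  assume a: "antimatroid S F" and c: "am_convex S F C"
  have "am_int S F C \<subseteq> S" using c unfolding am_int_def am_convex_def by auto
  moreover have "finite S" using amD(1)[OF a] .
  ultimately show ?thesis by (rule finite_subset)
qed

lemma convex_finite: "antimatroid S F \<Longrightarrow> finite {C. am_convex S F C}"
proof -
  assume a: "antimatroid S F"
  have "{C. am_convex S F C} \<subseteq> Pow S" unfolding am_convex_def by auto
  moreover have "finite (Pow S)" using amD(1)[OF a] by simp
  ultimately show ?thesis by (rule finite_subset)
qed

lemma tutte_reindex:
  assumes a: "antimatroid S F"
  shows "(\<Sum>A\<in>Pow S. h A) = (\<Sum>(C,B)\<in>Sigma {C. am_convex S F C} (\<lambda>C. Pow (am_int S F C)). h ((S - C) \<union> B))"
proof (rule sum.reindex_bij_witness[where i = "\<lambda>(C,B). (S - C) \<union> B" and j = "\<lambda>A. (S - ker F A, A - ker F A)"])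
  fix A assume A: "A \<in> Pow S"
  have kS: "ker F A \<subseteq> S" using A ker_sub[of F A] by blast
  have eqA: "S - (S - ker F A) \<union> (A - ker F A) = A"
    using kS ker_sub[of F A] by auto
  show "(case (S - ker F A, A - ker F A) of (C, B) \<Rightarrow> S - C \<union> B) = A"
    by (simp only: prod.case eqA)
  show "(case (S - ker F A, A - ker F A) of (C, B) \<Rightarrow> h (S - C \<union> B)) = h A"
    by (simp only: prod.case eqA)
  have conv: "am_convex S F (S - ker F A)" unfolding am_convex_def using kS ker_in[OF a]
    by (simp add: double_diff)
  have "A - ker F A \<subseteq> am_int S F (S - ker F A)"
  proof
    fix x assume x: "x \<in> A - ker F A"
    then have xC: "x \<in> S - ker F A" using A by auto
    have "\<not> insert x (S - (S - ker F A)) \<in> F"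
    proof
      assume "insert x (S - (S - ker F A)) \<in> F"
      then have "insert x (ker F A) \<in> F" using kS by (simp add: double_diff)
      then have "insert x (ker F A) \<subseteq> ker F A" using x ker_sub[of F A] by (intro ker_max) auto
      then show False using x by auto
    qed
    then show "x \<in> am_int S F (S - ker F A)" using extreme_iff2[OF a conv xC] xC
      unfolding am_int_def by auto
  qed
  then show "(S - ker F A, A - ker F A) \<in> Sigma {C. am_convex S F C} (\<lambda>C. Pow (am_int S F C))"
    using conv by auto
next
  fix p assume p: "p \<in> Sigma {C. am_convex S F C} (\<lambda>C. Pow (am_int S F C))"
  obtain C B where cb: "p = (C, B)" by fastforce
  have C: "am_convex S F C" and B: "B \<subseteq> am_int S F C" using p cb by auto
  have BC: "B \<subseteq> C" "C \<subseteq> S" using B C unfolding am_int_def am_convex_def by auto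
  show "(case p of (C, B) \<Rightarrow> S - C \<union> B) \<in> Pow S" using cb BC by auto
  show "(\<lambda>A. (S - ker F A, A - ker F A)) (case p of (C, B) \<Rightarrow> S - C \<union> B) = p"
    using cb ker_conv[OF a C B] BC by auto
qed

lemma sum_pow_binom:
  fixes q :: "'b::comm_ring_1"
  assumes "finite I"
  shows "(\<Sum>B\<in>Pow I. q ^ card B) = (q + 1) ^ card I"
proof -
  have "(\<Prod>x\<in>I. q + 1) = (\<Sum>X\<in>Pow I. (\<Prod>x\<in>X. q) * (\<Prod>x\<in>I-X. 1))"
    by (rule prod_add[OF assms])
  then show ?thesis by simp
qed

lemma const_pow_mult: "[:c:] ^ n * Q = smult (c ^ n) Q"
  by (induction n) (auto simp: algebra_simps)

lemma tutte_poly_conv: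
  assumes a: "antimatroid S F"
  shows "tutte_poly S F = (\<Sum>C\<in>{C. am_convex S F C}.
           [:[:-1, 1:]:] ^ card C * [:0, 1:] ^ card (am_int S F C))"
proof -
  let ?p = "[:[:-1, 1:]:] :: int poly poly" and ?q = "[:-1, 1:] :: int poly poly"
  have fS: "finite S" using amD(1)[OF a] .
  have q1: "[:-1, 1:] + 1 = ([:0, 1:] :: int poly poly)" by (simp add: one_pCons)
  have kS: "ker F S = S" using ker_sub[of F S] ker_max[OF amD(4)[OF a], of S] by auto
  have rS: "am_rank F S = card S" using am_rank_ker[OF a] kS by simp
  have "tutte_poly S F = (\<Sum>A\<in>Pow S. ?p ^ (am_rank F S - am_rank F A) * ?q ^ (card A - am_rank F A))"
    unfolding tutte_poly_def by simp
  also have "\<dots> = (\<Sum>(C,B)\<in>Sigma {C. am_convex S F C} (\<lambda>C. Pow (am_int S F C)).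
      ?p ^ (am_rank F S - am_rank F ((S - C) \<union> B)) * ?q ^ (card ((S - C) \<union> B) - am_rank F ((S - C) \<union> B)))"
    by (rule tutte_reindex[OF a])
  also have "\<dots> = (\<Sum>(C,B)\<in>Sigma {C. am_convex S F C} (\<lambda>C. Pow (am_int S F C)).
      ?p ^ card C * ?q ^ card B)"
  proof (rule sum.cong[OF refl])
    fix x assume x: "x \<in> Sigma {C. am_convex S F C} (\<lambda>C. Pow (am_int S F C))"
    obtain C B where cb: "x = (C, B)" by fastforce
    have C: "am_convex S F C" and B: "B \<subseteq> am_int S F C" using x cb by auto
    have BC: "B \<subseteq> C" "C \<subseteq> S" using B C unfolding am_int_def am_convex_def by auto
    have fC1: "finite C" using BC(2) fS by (rule finite_subset)
    have fC: "finite C" "finite B" using fC1 BC(1) finite_subset[OF BC(1) fC1] by auto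
    have r: "am_rank F ((S - C) \<union> B) = card (S - C)"
      using am_rank_ker[OF a] ker_conv[OF a C B] by simp
    have c1: "card S - card (S - C) = card C" using BC fC fS
      using card_Diff_subset[OF fC(1) BC(2)] card_mono[OF fS BC(2)] by simp
    have c2: "card ((S - C) \<union> B) - card (S - C) = card B"
      using BC fC fS by (subst card_Un_disjoint) auto
    show "(case x of (C, B) \<Rightarrow> ?p ^ (am_rank F S - am_rank F ((S - C) \<union> B)) * ?q ^ (card ((S - C) \<union> B) - am_rank F ((S - C) \<union> B)))
       = (case x of (C, B) \<Rightarrow> ?p ^ card C * ?q ^ card B)"
      using cb r rS c1 c2 by simp
  qed
  also have "\<dots> = (\<Sum>C\<in>{C. am_convex S F C}. \<Sum>B\<in>Pow (am_int S F C). ?p ^ card C * ?q ^ card B)"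
    by (rule sum.Sigma[symmetric]) (use convex_finite[OF a] int_finite[OF a] in auto)
  also have "\<dots> = (\<Sum>C\<in>{C. am_convex S F C}. ?p ^ card C * (\<Sum>B\<in>Pow (am_int S F C). ?q ^ card B))"
    by (simp add: sum_distrib_left)
  also have "\<dots> = (\<Sum>C\<in>{C. am_convex S F C}. ?p ^ card C * [:0, 1:] ^ card (am_int S F C))"
  proof (rule sum.cong[OF refl])
    fix C assume "C \<in> {C. am_convex S F C}"
    then have "finite (am_int S F C)" using int_finite[OF a] by auto
    from sum_pow_binom[OF this, of ?q] show "?p ^ card C * (\<Sum>B\<in>Pow (am_int S F C). ?q ^ card B) =
       ?p ^ card C * [:0, 1:] ^ card (am_int S F C)" by (simp add: q1)
  qed
  finally show ?thesis .
qed

lemma coeff_X_pow: "coeff ([:0, 1:] ^ k :: 'b::comm_ring_1 poly) 1 = (if k = 1 then 1 else 0)"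
proof -
  have "[:0, 1:] ^ k = (monom 1 k :: 'b poly)" by (simp add: monom_altdef)
  then show ?thesis by (simp add: coeff_monom)
qed

lemma coeff_p_pow: "coeff ([:-1, 1:] ^ k :: int poly) 0 = (-1) ^ k"
  by (simp flip: poly_0_coeff_0 add: poly_power)

lemma tutte_coeff_conv:
  assumes a: "antimatroid S F"
  shows "tutte_coeff S F 0 1 = (\<Sum>C\<in>{C. am_convex S F C \<and> card (am_int S F C) = 1}. (-1) ^ card C)"
proof -
  have "tutte_coeff S F 0 1 = (\<Sum>C\<in>{C. am_convex S F C}. if card (am_int S F C) = 1 then (-1) ^ card C else 0)"
    unfolding tutte_coeff_def tutte_poly_conv[OF a] coeff_sum const_pow_mult coeff_smult coeff_X_pow
    by (rule sum.cong[OF refl]) (simp add: coeff_p_pow)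
  also have "\<dots> = (\<Sum>C\<in>{C \<in> {C. am_convex S F C}. card (am_int S F C) = 1}. (-1) ^ card C)"
    by (rule sum.inter_filter[symmetric, OF convex_finite[OF a]])
  finally show ?thesis by simp
qed

lemma int_S:
  assumes a: "antimatroid S F" and C: "am_convex S F C" and p: "am_int S F C = {p}"
  shows "p \<in> am_int S F S"
proof -
  have pC: "p \<in> C" "\<not> am_extreme S F C p" using p unfolding am_int_def by auto
  have CS: "C \<subseteq> S" using C unfolding am_convex_def by auto
  have SS: "am_convex S F S" using amD(2,3)[OF a] unfolding am_convex_def by auto
  have "\<not> am_extreme S F S p"
  proof
    assume "am_extreme S F S p"
    then have "insert p (S - S) \<in> F" using extreme_iff2[OF a SS] pC CS by auto
    then have "{p} \<in> F" by simp
    moreover have "S - C \<in> F" using C unfolding am_convex_def by auto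
    ultimately have "{p} \<union> (S - C) \<in> F" using amD(5)[OF a] by blast
    then have "insert p (S - C) \<in> F" by simp
    then show False using extreme_iff2[OF a C pC(1)] pC(2) by simp
  qed
  then show ?thesis using pC CS unfolding am_int_def by auto
qed

theorem corollary4p5:
  fixes S :: "'a set" and F :: "'a set set"
  assumes "antimatroid S F"
  shows "tutte_coeff S F 0 1 = (\<Sum>i=0..card S. (-1) ^ i * int (a_i1 S F i))
       \<and> (\<Sum>i=0..card S. (-1) ^ i * int (a_i1 S F i))
           = (\<Sum>p\<in>am_int S F S. \<Sum>C\<in>{C. am_convex S F C \<and> am_int S F C = {p}}. (-1) ^ card C)"
proof -
  note a = assms
  define D where "D = {C. am_convex S F C \<and> card (am_int S F C) = 1}"
  have fD: "finite D" unfolding D_def by (rule finite_subset[OF _ convex_finite[OF a]]) auto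
  have fS: "finite S" using amD(1)[OF a] .
  have e1: "(\<Sum>i=0..card S. (-1) ^ i * int (a_i1 S F i)) = (\<Sum>C\<in>D. (-1) ^ card C)"
  proof -
    have "(\<Sum>C\<in>D. (-1) ^ card C) = (\<Sum>i\<in>{0..card S}. \<Sum>C\<in>{C\<in>D. card C = i}. (-1) ^ card C :: int)"
    proof (rule sum.group[symmetric, OF fD])
      show "finite {0..card S}" by simp
      show "card ` D \<subseteq> {0..card S}" unfolding D_def am_convex_def using fS
        by (auto intro: card_mono)
    qed
    also have "\<dots> = (\<Sum>i=0..card S. (-1) ^ i * int (a_i1 S F i))"
    proof (rule sum.cong[OF refl])
      fix i
      have "{C\<in>D. card C = i} = {C. am_convex S F C \<and> card C = i \<and> card (am_int S F C) = 1}"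
        unfolding D_def by auto
      then have "(\<Sum>C\<in>{C\<in>D. card C = i}. (-1) ^ card C :: int) = (\<Sum>C\<in>{C. am_convex S F C \<and> card C = i \<and> card (am_int S F C) = 1}. (-1) ^ i)"
        by (intro sum.cong) auto
      then show "(\<Sum>C\<in>{C\<in>D. card C = i}. (-1) ^ card C :: int) = (-1) ^ i * int (a_i1 S F i)"
        unfolding a_i1_def by simp
    qed
    finally show ?thesis by simp
  qed
  have e2: "(\<Sum>C\<in>D. (-1) ^ card C) = (\<Sum>p\<in>am_int S F S. \<Sum>C\<in>{C. am_convex S F C \<and> am_int S F C = {p}}. (-1) ^ card C :: int)"
  proof -
    have "(\<Sum>C\<in>D. (-1) ^ card C) = (\<Sum>p\<in>am_int S F S. \<Sum>C\<in>{C\<in>D. the_elem (am_int S F C) = p}. (-1) ^ card C :: int)"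
    proof (rule sum.group[symmetric, OF fD])
      have SS: "am_convex S F S" using amD(2,3)[OF a] unfolding am_convex_def by auto
      show "finite (am_int S F S)" by (rule int_finite[OF a SS])
      show "(\<lambda>C. the_elem (am_int S F C)) ` D \<subseteq> am_int S F S"
      proof
        fix x assume "x \<in> (\<lambda>C. the_elem (am_int S F C)) ` D"
        then obtain C where C: "C \<in> D" "x = the_elem (am_int S F C)" by auto
        then obtain p where p: "am_int S F C = {p}" unfolding D_def by (auto simp: card_1_singleton_iff)
        then show "x \<in> am_int S F S" using C int_S[OF a _ p] unfolding D_def by auto
      qed
    qed
    also have "\<dots> = (\<Sum>p\<in>am_int S F S. \<Sum>C\<in>{C. am_convex S F C \<and> am_int S F C = {p}}. (-1) ^ card C :: int)"
    proof (rule sum.cong[OF refl])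
      fix p
      have h: "(card I = 1 \<and> the_elem I = p) \<longleftrightarrow> I = {p}" for I :: "'a set"
      proof
        assume h1: "card I = 1 \<and> the_elem I = p"
        then have "card I = 1" by simp
        then obtain q where "I = {q}" by (rule card_1_singletonE)
        with h1 show "I = {p}" by simp
      qed simp
      have "{C\<in>D. the_elem (am_int S F C) = p} = {C. am_convex S F C \<and> am_int S F C = {p}}"
      proof (rule set_eqI)
        fix C
        show "C \<in> {C\<in>D. the_elem (am_int S F C) = p} \<longleftrightarrow> C \<in> {C. am_convex S F C \<and> am_int S F C = {p}}"
          using h[of "am_int S F C"] unfolding D_def mem_Collect_eq by blast
      qed
      then show "(\<Sum>C\<in>{C\<in>D. the_elem (am_int S F C) = p}. (-1) ^ card C :: int) = (\<Sum>C\<in>{C. am_convex S F C \<and> am_int S F C = {p}}. (-1) ^ card C)"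
        by simp
    qed
    finally show ?thesis .
  qed
  show ?thesis using tutte_coeff_conv[OF a] e1 e2 unfolding D_def by simp
qed

end
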